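(* Let $\omega_a,\omega_c,\kappa,\lambda>0$, $N>0$ and $K\in\mathbb{R}$. Consider, for $(Q,P,X,Y)$ in a neighbourhood of the origin with $X^2+Y^2<\tfrac14$, the system of ordinary differential equations \begin{align*} \dot Q&=\omega_c P-\kappa Q+KN\,P\,(Q^2+P^2),\\ \dot P&=-\omega_c Q-\kappa P-2\sqrt{2}\,\lambda X-KN\,Q\,(Q^2+P^2),\\ \dot X&=-\omega_a Y,\\ \dot Y&=\omega_a X-2\sqrt{2}\,\lambda\, Z\, Q,\qquad Z:=-\sqrt{\tfrac14-X^2-Y^2}. \end{align*} The origin $(Q,P,X,Y)=(0,0,0,0)$ is a fixed point. Let $J$ be the Jacobian matrix of the vector field at the origin. Then all eigenvalues of $J$ have strictly negative real part if and only if $$\frac{4\lambda^2}{\omega_a\omega_c}<1+\Big(\frac{\kappa}{\omega_c}\Big)^2 .$$ In particular, this condition does not depend on $K$.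
   Context: This is the mean-field dynamics of the dissipative quantum Rabi model with Kerr nonlinearity $H/\hbar=\omega_c a^\dagger a+\omega_a S_z+\frac{\lambda}{\sqrt N}(S_++S_-)(a+a^\dagger)+K(a^\dagger)^2a^2$ with cavity loss rate $\kappa$: $Q=\sqrt2\,\mathrm{Re}\,\alpha$, $P=\sqrt2\,\mathrm{Im}\,\alpha$ with $\alpha=\langle a\rangle/\sqrt N$, and $(X,Y,Z)=(\langle S_x\rangle,\langle S_y\rangle,\langle S_z\rangle)/N$ constrained to $X^2+Y^2+Z^2=\tfrac14$; the origin corresponds to the normal phase $Q=P=X=Y=0$, $Z=-\tfrac12$. *)

theory Defs
  imports "HOL-Analysis.Analysis"
begin

definition rabi_Z :: "real \<Rightarrow> real \<Rightarrow> real" where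
  "rabi_Z X Y = - sqrt (1/4 - X^2 - Y^2)"

definition rabi_field ::
  "real \<Rightarrow> real \<Rightarrow> real \<Rightarrow> real \<Rightarrow> real \<Rightarrow> real \<Rightarrow> real^4 \<Rightarrow> real^4" where
  "rabi_field wa wc \<kappa> lam N K v =
     (let Q = v$1; P = v$2; X = v$3; Y = v$4 in
      vector [ wc * P - \<kappa> * Q + K * N * P * (Q^2 + P^2),
               - wc * Q - \<kappa> * P - 2 * sqrt 2 * lam * X - K * N * Q * (Q^2 + P^2),
               - wa * Y,
               wa * X - 2 * sqrt 2 * lam * rabi_Z X Y * Q ])"

definition rabi_jacobian :: "real \<Rightarrow> real \<Rightarrow> real \<Rightarrow> real \<Rightarrow> real \<Rightarrow> real \<Rightarrow> real^4^4" where
  "rabi_jacobian wa wc \<kappa> lam N K =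
     matrix (frechet_derivative (rabi_field wa wc \<kappa> lam N K) (at 0))"

definition cmat :: "real^'n^'n \<Rightarrow> complex^'n^'n" where
  "cmat A = (\<chi> i j. complex_of_real (A$i$j))"

definition is_eigenvalue :: "real^'n^'n \<Rightarrow> complex \<Rightarrow> bool" where
  "is_eigenvalue A z \<longleftrightarrow> (\<exists>v::complex^'n. v \<noteq> 0 \<and> cmat A *v v = z *s v)"

end

theory Submission
  imports Defs
begin

lemma vector4_nth:
  "(vector [a,b,c,d] :: 'a::zero^4)$1 = a"
  "(vector [a,b,c,d] :: 'a::zero^4)$2 = b"
  "(vector [a,b,c,d] :: 'a::zero^4)$3 = c"
  "(vector [a,b,c,d] :: 'a::zero^4)$4 = d"
  unfolding vector_def by simp_all

lemma vector4_axis: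
  "(vector [a,b,c,d] :: real^4) = a *\<^sub>R axis 1 1 + b *\<^sub>R axis 2 1 + c *\<^sub>R axis 3 1 + d *\<^sub>R axis 4 1"
  by (simp add: vec_eq_iff forall_4 vector4_nth axis_def)

definition "rabi_L wa wc \<kappa> lam (v::real^4) =
   (wc * v$2 - \<kappa> * v$1) *\<^sub>R axis 1 1 + (- wc * v$1 - \<kappa> * v$2 - 2 * sqrt 2 * lam * v$3) *\<^sub>R axis 2 1
   + (- wa * v$4) *\<^sub>R axis 3 1 + (wa * v$3 + sqrt 2 * lam * v$1) *\<^sub>R axis 4 1"

lemma rabi_deriv:
  "(rabi_field wa wc \<kappa> lam N K has_derivative rabi_L wa wc \<kappa> lam) (at 0)"
proof -
  have e: "rabi_field wa wc \<kappa> lam N K = (\<lambda>v. 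
     (wc * v$2 - \<kappa> * v$1 + K * N * v$2 * ((v$1)^2 + (v$2)^2)) *\<^sub>R axis 1 1 
   + (- wc * v$1 - \<kappa> * v$2 - 2 * sqrt 2 * lam * v$3 - K * N * v$1 * ((v$1)^2 + (v$2)^2)) *\<^sub>R axis 2 1
   + (- wa * v$4) *\<^sub>R axis 3 1 + (wa * v$3 - 2 * sqrt 2 * lam * (- sqrt (1/4 - (v$3)^2 - (v$4)^2)) * v$1) *\<^sub>R axis 4 1)"
    by (rule ext) (simp add: rabi_field_def rabi_Z_def Let_def vector4_axis)
  have sq: "sqrt (1/4) = 1/2" by (simp add: real_sqrt_divide)
  show ?thesis unfolding e
    apply (rule has_derivative_eq_rhs)
     apply (rule derivative_eq_intros bounded_linear.has_derivative[OF bounded_linear_vec_nth] | simp)+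
    apply (rule ext)
    apply (simp add: rabi_L_def sq algebra_simps)
    done
qed

lemma jac: "rabi_jacobian wa wc \<kappa> lam N K = matrix (rabi_L wa wc \<kappa> lam)"
  unfolding rabi_jacobian_def using rabi_deriv frechet_derivative_at by metis

lemma Jv:
  fixes v :: "complex^4"
  shows "(cmat (rabi_jacobian wa wc \<kappa> lam N K) *v v)$1 = - \<kappa> * v$1 + wc * v$2"
    "(cmat (rabi_jacobian wa wc \<kappa> lam N K) *v v)$2 = - wc * v$1 - \<kappa> * v$2 - 2 * sqrt 2 * lam * v$3"
    "(cmat (rabi_jacobian wa wc \<kappa> lam N K) *v v)$3 = - wa * v$4"
    "(cmat (rabi_jacobian wa wc \<kappa> lam N K) *v v)$4 = sqrt 2 * lam * v$1 + wa * v$3"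
  unfolding jac by (simp_all add: matrix_vector_mult_def cmat_def matrix_def sum_4 rabi_L_def axis_def algebra_simps)

lemma eig_eq:
  assumes wa: "wa > 0" and wc: "wc > 0" and lam: "lam > 0"
    and ev: "is_eigenvalue (rabi_jacobian wa wc \<kappa> lam N K) z"
  shows "((z + of_real \<kappa>)^2 + (of_real wc)^2) * (z^2 + (of_real wa)^2) = of_real (4 * lam^2 * wa * wc)"
proof -
  obtain v where v0: "v \<noteq> 0" and e: "cmat (rabi_jacobian wa wc \<kappa> lam N K) *v v = z *s v"
    using ev unfolding is_eigenvalue_def by blast
  define Q where "Q = v$1"
  define P where "P = v$2"
  define X where "X = v$3"
  define Y where "Y = v$4"
  define c where "c = complex_of_real (2 * sqrt 2 * lam)"
  define d where "d = complex_of_real (sqrt 2 * lam)"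
  have E1: "- \<kappa> * Q + wc * P = z * Q"
    using arg_cong[OF e, of "\<lambda>w. w$1"] by (simp add: Jv Q_def P_def)
  have E2: "- wc * Q - \<kappa> * P - c * X = z * P"
    using arg_cong[OF e, of "\<lambda>w. w$2"] by (simp add: Jv Q_def P_def X_def c_def)
  have E3: "- wa * Y = z * X"
    using arg_cong[OF e, of "\<lambda>w. w$3"] by (simp add: Jv Y_def X_def)
  have E4: "d * Q + wa * X = z * Y"
    using arg_cong[OF e, of "\<lambda>w. w$4"] by (simp add: Jv Q_def Y_def X_def d_def)
  have c0: "c \<noteq> 0" using lam by (simp add: c_def)
  have Q0: "Q \<noteq> 0"
  proof
    assume "Q = 0"
    then have "P = 0" using E1 wc by simp
    then have "X = 0" using E2 c0 \<open>Q = 0\<close> by simp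
    then have "Y = 0" using E3 wa by simp
    then have "v = 0" using \<open>Q = 0\<close> \<open>P = 0\<close> \<open>X = 0\<close>
      by (simp add: vec_eq_iff forall_4 Q_def P_def X_def Y_def)
    then show False using v0 by simp
  qed
  have B: "(z^2 + wa^2) * X = - wa * d * Q"
  proof -
    have "z^2 * X = z * (z * X)" by (simp add: power2_eq_square)
    also have "\<dots> = z * (- wa * Y)" by (simp only: E3)
    also have "\<dots> = - wa * (z * Y)" by (simp add: algebra_simps)
    also have "\<dots> = - wa * (d * Q + wa * X)" using E4 by simp
    finally show ?thesis by (simp add: algebra_simps power2_eq_square)
  qed
  have A: "((z + \<kappa>)^2 + wc^2) * Q = - wc * c * X"
  proof -
    have "(z + \<kappa>)^2 * Q = (z + \<kappa>) * (wc * P)" using E1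
      by (simp add: power2_eq_square algebra_simps)
    also have "\<dots> = wc * (z * P + \<kappa> * P)" by (simp add: algebra_simps)
    also have "\<dots> = wc * (- wc * Q - c * X)" using E2 by (simp add: algebra_simps flip: E2)
    finally have h: "(z + \<kappa>)^2 * Q = wc * (- wc * Q - c * X)" .
    have "((z + \<kappa>)^2 + wc^2) * Q = (z + \<kappa>)^2 * Q + wc^2 * Q" by (simp add: distrib_right)
    also have "\<dots> = wc * (- wc * Q - c * X) + wc^2 * Q" by (simp only: h)
    also have "\<dots> = - wc * c * X" by (simp add: algebra_simps power2_eq_square)
    finally show ?thesis .
  qed
  have cd: "c * d = of_real (4 * lam^2)"
    by (simp add: c_def d_def power2_eq_square algebra_simps flip: of_real_mult)
  have "((z + \<kappa>)^2 + wc^2) * (z^2 + wa^2) * Q = - wc * c * ((z^2 + wa^2) * X)"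
    using A by (metis (no_types, lifting) mult.assoc mult.commute)
  also have "\<dots> = wc * wa * (c * d) * Q" unfolding B by (simp add: algebra_simps)
  finally have "((z + \<kappa>)^2 + wc^2) * (z^2 + wa^2) * Q = of_real (4 * lam^2 * wa * wc) * Q"
    unfolding cd by (simp add: algebra_simps)
  then show ?thesis using Q0 by simp
qed

lemma root_eig:
  assumes wa: "wa > 0" and wc: "wc > 0" and s: "s \<ge> 0"
    and f: "((s + \<kappa>)^2 + wc^2) * (s^2 + wa^2) = 4 * lam^2 * wa * wc"
  shows "is_eigenvalue (rabi_jacobian wa wc \<kappa> lam N K) (complex_of_real s)"
proof -
  define B where "B = s^2 + wa^2"
  have B0: "B > 0" using wa by (simp add: B_def add_nonneg_pos)
  define d where "d = sqrt 2 * lam"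
  define P where "P = (s + \<kappa>) / wc"
  define X where "X = - wa * d / B"
  define Y where "Y = s * d / B"
  define v :: "complex^4" where "v = vector [1, of_real P, of_real X, of_real Y]"
  have R1: "- \<kappa> * 1 + wc * P = s * 1" using wc by (simp add: P_def)
  have R2: "- wc * 1 - \<kappa> * P - 2 * sqrt 2 * lam * X = s * P"
  proof -
    have dd: "2 * sqrt 2 * lam * d = 2 * lam^2 * 2" by (simp add: d_def power2_eq_square algebra_simps)
    have "(- wc * 1 - \<kappa> * P - 2 * sqrt 2 * lam * X - s * P) * (wc * B)
       = - (wc^2 * B) - ((s+\<kappa>)^2 * B) + wa * wc * (2 * sqrt 2 * lam * d)"
      using wc B0 by (simp add: P_def X_def field_simps power2_eq_square)
    also have "\<dots> = 0" using f unfolding dd B_def by (simp add: algebra_simps power2_eq_square)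
    finally show ?thesis using wc B0 by simp
  qed
  have R3: "- wa * Y = s * X" by (simp add: X_def Y_def)
  have dB: "d * B = s * s * d + wa * wa * d" by (simp add: B_def algebra_simps power2_eq_square)
  have R4: "d * 1 + wa * X = s * Y"
    using B0 dB by (simp add: X_def Y_def field_simps)
  have "v \<noteq> 0" by (simp add: v_def vec_eq_iff vector4_nth exI[of _ 1])
  moreover have "cmat (rabi_jacobian wa wc \<kappa> lam N K) *v v = complex_of_real s *s v"
    unfolding vec_eq_iff forall_4 Jv
    apply (simp add: v_def vector4_nth)
    using R1 R2 R3 R4 unfolding d_def
    apply (simp flip: of_real_mult of_real_add of_real_minus of_real_diff)
    apply (metis R2 of_real_diff of_real_mult of_real_numeral)
    done
  ultimately show ?thesis unfolding is_eigenvalue_def by blast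
qed

lemma cond_iff:
  fixes wa wc lam \<kappa> :: real
  assumes wa: "wa > 0" and wc: "wc > 0"
  shows "4 * lam^2 / (wa * wc) < 1 + (\<kappa> / wc)^2 \<longleftrightarrow> 4 * lam^2 * wa * wc < wa^2 * (\<kappa>^2 + wc^2)"
proof -
  have e: "1 + (\<kappa> / wc)^2 = (wc^2 + \<kappa>^2) / wc^2" using wc by (simp add: field_simps power2_eq_square)
  have "4 * lam^2 / (wa * wc) < (wc^2 + \<kappa>^2) / wc^2 \<longleftrightarrow> 4 * lam^2 * wc^2 < (wc^2 + \<kappa>^2) * (wa * wc)"
  proof -
    have p: "\<not> wa * wc * wc^2 < 0" using wa wc by (simp add: not_less)
    show ?thesis using wa wc p by (simp add: frac_less_eq divide_less_0_iff)
  qed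
  also have "\<dots> \<longleftrightarrow> (4 * lam^2 * wc) * wc < (wa * (wc^2 + \<kappa>^2)) * wc" by (simp add: power2_eq_square algebra_simps)
  also have "\<dots> \<longleftrightarrow> (4 * lam^2 * wc) * wa < (wa * (wc^2 + \<kappa>^2)) * wa" using wa wc by (simp add: ac_simps)
  finally show ?thesis unfolding e by (simp add: power2_eq_square algebra_simps)
qed

lemma stable_dir:
  assumes wa: "wa > 0" and wc: "wc > 0" and k: "\<kappa> > 0" and lam: "lam > 0"
    and c: "4 * lam^2 * wa * wc < wa^2 * (\<kappa>^2 + wc^2)"
    and ev: "is_eigenvalue (rabi_jacobian wa wc \<kappa> lam N K) z"
  shows "Re z < 0"
proof (rule ccontr)
  assume "\<not> Re z < 0"
  then have x0: "Re z \<ge> 0" by simp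
  define x where "x = Re z"
  define y where "y = Im z"
  define g where "g = 4 * lam^2 * wa * wc"
  have g0: "g > 0" using wa wc lam by (simp add: g_def)
  have zc: "z = Complex x y" by (simp add: x_def y_def)
  have E: "((z + of_real \<kappa>)^2 + (of_real wc)^2) * (z^2 + (of_real wa)^2) = of_real g"
    using eig_eq[OF wa wc lam ev] by (simp add: g_def)
  define Ar where "Ar = (x + \<kappa>)^2 - y^2 + wc^2"
  define Br where "Br = x^2 - y^2 + wa^2"
  have ReE: "Ar * Br - 4 * (x + \<kappa>) * x * y^2 = g"
    using arg_cong[OF E, of Re] unfolding zc
    by (simp add: Ar_def Br_def power2_eq_square algebra_simps)
  have ImE: "2 * y * (Ar * x + (x + \<kappa>) * Br) = 0"
    using arg_cong[OF E, of Im] unfolding zc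
    by (simp add: Ar_def Br_def power2_eq_square algebra_simps)
  show False
  proof (cases "y = 0")
    case True
    have "(\<kappa>^2 + wc^2) * wa^2 \<le> ((x + \<kappa>)^2 + wc^2) * (x^2 + wa^2)"
      apply (rule mult_mono)
      using x0 k unfolding x_def[symmetric] by (auto intro!: power_mono)
    also have "\<dots> = g" using ReE True by (simp add: Ar_def Br_def)
    finally show False using c unfolding g_def by (simp add: algebra_simps)
  next
    case False
    then have I: "Ar * x + (x + \<kappa>) * Br = 0" using ImE by simp
    show False
    proof (cases "x = 0")
      case True
      then have "Br = 0" using I k by simp
      then show False using ReE True g0 by simp
    next
      case False
      then have xp: "x > 0" using x0 x_def by simp
      have I': "Ar * x = - ((x + \<kappa>) * Br)" using I by (simp add: eq_neg_iff_add_eq_0)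
      have "x * (Ar * Br) = (Ar * x) * Br" by (simp add: ac_simps)
      also have "\<dots> = - (x + \<kappa>) * Br^2" unfolding I' by (simp add: power2_eq_square algebra_simps)
      also have "\<dots> \<le> 0" using xp k by (intro mult_nonpos_nonneg) auto
      finally have "Ar * Br \<le> 0" using xp by (simp add: mult_le_0_iff)
      moreover have "4 * (x + \<kappa>) * x * y^2 \<ge> 0" using xp k by simp
      ultimately show False using ReE g0 by linarith
    qed
  qed
qed

theorem mainTheorem1:
  fixes wa wc \<kappa> lam N K :: real
  assumes "wa > 0" "wc > 0" "\<kappa> > 0" "lam > 0" "N > 0"
  shows "(\<forall>z. is_eigenvalue (rabi_jacobian wa wc \<kappa> lam N K) z \<longrightarrow> Re z < 0)
         \<longleftrightarrow> 4 * lam^2 / (wa * wc) < 1 + (\<kappa> / wc)^2"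
proof -
  note wa = assms(1) and wc = assms(2) and k = assms(3) and lam = assms(4)
  define g where "g = 4 * lam^2 * wa * wc"
  define f where "f = (\<lambda>s::real. ((s + \<kappa>)^2 + wc^2) * (s^2 + wa^2))"
  show ?thesis unfolding cond_iff[OF wa wc]
  proof
    assume H: "\<forall>z. is_eigenvalue (rabi_jacobian wa wc \<kappa> lam N K) z \<longrightarrow> Re z < 0"
    show "4 * lam^2 * wa * wc < wa^2 * (\<kappa>^2 + wc^2)"
    proof (rule ccontr)
      assume "\<not> ?thesis"
      then have f0: "f 0 \<le> g" by (simp add: f_def g_def algebra_simps)
      define b where "b = g + 1"
      have b1: "b \<ge> 1" using wa wc by (simp add: b_def g_def)
      have bb1: "b^2 \<le> (b + \<kappa>)^2" using b1 k by (intro power_mono) auto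
      have bb2: "b^2 \<le> (b + \<kappa>)^2 + wc^2" using bb1 by (simp add: add_increasing2)
      have bb3: "b^2 \<le> b^2 + wa^2" by simp
      have "b * 1 \<le> b^2 * b^2"
        using b1 by (intro mult_mono) (auto simp: power2_eq_square intro: order_trans[OF _ mult_right_mono[of 1 b b]])
      also have "b^2 * b^2 \<le> f b" unfolding f_def
        using bb2 bb3 by (intro mult_mono) auto
      finally have fb: "g \<le> f b" by (simp add: b_def)
      have "\<exists>s. 0 \<le> s \<and> s \<le> b \<and> f s = g"
        by (rule IVT[of f 0 g b, OF f0 fb]) (use b1 in \<open>auto simp: f_def intro!: continuous_intros\<close>)
      then obtain s where s: "0 \<le> s" "f s = g" by blast
      have "is_eigenvalue (rabi_jacobian wa wc \<kappa> lam N K) (complex_of_real s)"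
        by (rule root_eig[OF wa wc s(1)]) (use s(2) in \<open>simp add: f_def g_def\<close>)
      then show False using H s(1) by fastforce
    qed
  next
    assume "4 * lam^2 * wa * wc < wa^2 * (\<kappa>^2 + wc^2)"
    then show "\<forall>z. is_eigenvalue (rabi_jacobian wa wc \<kappa> lam N K) z \<longrightarrow> Re z < 0"
      using stable_dir[OF wa wc k lam] by blast
  qed
qed

end
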